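(* Let $G$ be a connected graph on $n\ge2$ vertices with transmissions $\mathbb{D}_1\ge\mathbb{D}_2\ge\cdots\ge\mathbb{D}_n$ and diameter $d$. Then for $1\le i\le n$, \[\rho(\mathbb{D}(G))\le \frac{\mathbb{D}_i-d+\sqrt{(\mathbb{D}_i+d)^2+4d\sum_{k=1}^{i-1}(\mathbb{D}_k-\mathbb{D}_i)}}{2},\] with equality if and only if $\mathbb{D}_1=\mathbb{D}_2=\cdots=\mathbb{D}_n$.
   Context: $\mathbb{D}(G)=(d_{ij})$ is the distance matrix of $G$; the transmission of $v_i$ is $\mathbb{D}_i=\sum_j d_{ij}$; $\rho$ is the spectral radius. An empty sum equals $0$. *)

theory Defs
  imports "Jordan_Normal_Form.Spectral_Radius"
begin

definition simple_graph :: "nat \<Rightarrow> (nat \<Rightarrow> nat \<Rightarrow> bool) \<Rightarrow> bool" where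
  "simple_graph n E \<longleftrightarrow> (\<forall>u v. E u v \<longrightarrow> E v u) \<and> (\<forall>u. \<not> E u u)
      \<and> (\<forall>u v. E u v \<longrightarrow> u < n \<and> v < n)"

definition is_walk :: "nat \<Rightarrow> (nat \<Rightarrow> nat \<Rightarrow> bool) \<Rightarrow> nat list \<Rightarrow> bool" where
  "is_walk n E xs \<longleftrightarrow> xs \<noteq> [] \<and> set xs \<subseteq> {..<n}
      \<and> (\<forall>k. Suc k < length xs \<longrightarrow> E (xs ! k) (xs ! Suc k))"

definition graph_connected :: "nat \<Rightarrow> (nat \<Rightarrow> nat \<Rightarrow> bool) \<Rightarrow> bool" where
  "graph_connected n E \<longleftrightarrow>
     (\<forall>u<n. \<forall>v<n. \<exists>xs. is_walk n E xs \<and> hd xs = u \<and> last xs = v)"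

definition gdist :: "nat \<Rightarrow> (nat \<Rightarrow> nat \<Rightarrow> bool) \<Rightarrow> nat \<Rightarrow> nat \<Rightarrow> nat" where
  "gdist n E u v = (LEAST k. \<exists>xs. is_walk n E xs \<and> hd xs = u \<and> last xs = v
                                  \<and> length xs = Suc k)"

definition diameter :: "nat \<Rightarrow> (nat \<Rightarrow> nat \<Rightarrow> bool) \<Rightarrow> nat" where
  "diameter n E = Max {gdist n E u v | u v. u < n \<and> v < n}"

definition distance_matrix :: "nat \<Rightarrow> (nat \<Rightarrow> nat \<Rightarrow> bool) \<Rightarrow> complex mat" where
  "distance_matrix n E = mat n n (\<lambda>(i, j). of_nat (gdist n E i j))"

definition transmission :: "nat \<Rightarrow> (nat \<Rightarrow> nat \<Rightarrow> bool) \<Rightarrow> nat \<Rightarrow> nat" where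
  "transmission n E i = (\<Sum>j<n. gdist n E i j)"

end

theory Submission
  imports Defs
begin

lemma walk_rev:
  assumes g: "simple_graph n E" and w: "is_walk n E xs"
  shows "is_walk n E (rev xs)"
  unfolding is_walk_def
proof (intro conjI allI impI)
  show "rev xs \<noteq> []" using w by (simp add: is_walk_def)
  show "set (rev xs) \<subseteq> {..<n}" using w by (simp add: is_walk_def)
  fix k assume k: "Suc k < length (rev xs)"
  define L where "L = length xs"
  define m where "m = L - Suc (Suc k)"
  have L: "Suc k < L" using k L_def by simp
  have m1: "Suc m = L - Suc k" using L m_def by simp
  have sm: "Suc m < length xs" using L m1 L_def by simp
  have "E (xs ! m) (xs ! Suc m)" using w sm unfolding is_walk_def by blast
  hence "E (xs ! Suc m) (xs ! m)" using g unfolding simple_graph_def by blast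
  moreover have "rev xs ! k = xs ! Suc m" using L m1 by (simp add: rev_nth L_def)
  moreover have "rev xs ! Suc k = xs ! m" using L m_def by (simp add: rev_nth L_def)
  ultimately show "E (rev xs ! k) (rev xs ! Suc k)" by simp
qed

lemma gdist_le:
  assumes "is_walk n E xs" "hd xs = u" "last xs = v"
  shows "gdist n E u v \<le> length xs - 1"
proof -
  have "xs \<noteq> []" using assms by (simp add: is_walk_def)
  hence "length xs = Suc (length xs - 1)" by simp
  thus ?thesis unfolding gdist_def using assms by (intro Least_le) blast
qed

lemma gdist_ex:
  assumes c: "graph_connected n E" and "u < n" "v < n"
  shows "\<exists>xs. is_walk n E xs \<and> hd xs = u \<and> last xs = v \<and> length xs = Suc (gdist n E u v)"
proof -
  obtain xs where xs: "is_walk n E xs" "hd xs = u" "last xs = v"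
    using c assms unfolding graph_connected_def by blast
  have "xs \<noteq> []" using xs by (simp add: is_walk_def)
  hence "length xs = Suc (length xs - 1)" by simp
  hence "\<exists>k. \<exists>xs. is_walk n E xs \<and> hd xs = u \<and> last xs = v \<and> length xs = Suc k"
    using xs by blast
  from LeastI_ex[OF this] show ?thesis unfolding gdist_def .
qed

lemma gdist_self: "u < n \<Longrightarrow> gdist n E u u = 0"
proof -
  assume "u < n"
  hence "is_walk n E [u]" by (simp add: is_walk_def)
  from gdist_le[OF this] show ?thesis by simp
qed

lemma gdist_pos:
  assumes c: "graph_connected n E" and "u < n" "v < n" "u \<noteq> v"
  shows "1 \<le> gdist n E u v"
proof (rule ccontr)
  assume "\<not> 1 \<le> gdist n E u v"
  hence z: "gdist n E u v = 0" by simp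
  obtain xs where xs: "is_walk n E xs" "hd xs = u" "last xs = v" "length xs = Suc 0"
    using gdist_ex[OF assms(1-3)] z by auto
  then obtain a where "xs = [a]" by (cases xs) auto
  thus False using xs assms(4) by simp
qed

lemma gdist_sym:
  assumes g: "simple_graph n E" and c: "graph_connected n E" and "u < n" "v < n"
  shows "gdist n E u v = gdist n E v u"
proof -
  have *: "gdist n E a b \<le> gdist n E b a" if ha: "a < n" and hb: "b < n" for a b
  proof -
    obtain xs where xs: "is_walk n E xs" "hd xs = b" "last xs = a" "length xs = Suc (gdist n E b a)"
      using gdist_ex[OF c hb ha] by blast
    have ne: "xs \<noteq> []" using xs by (simp add: is_walk_def)
    have "is_walk n E (rev xs)" by (rule walk_rev[OF g xs(1)])
    moreover have "hd (rev xs) = a" using ne xs by (simp add: hd_rev)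
    moreover have "last (rev xs) = b" using ne xs by (simp add: last_rev)
    ultimately have "gdist n E a b \<le> length (rev xs) - 1" by (rule gdist_le)
    thus ?thesis using xs by simp
  qed
  show ?thesis using *[of u v] *[of v u] assms by simp
qed

lemma gdist_le_diam:
  assumes "u < n" "v < n"
  shows "gdist n E u v \<le> diameter n E"
proof -
  have "finite {gdist n E u v | u v. u < n \<and> v < n}"
    by (rule finite_image_set2) auto
  thus ?thesis unfolding diameter_def using assms by (intro Max_ge) auto
qed

lemma gdist_nbr:
  assumes g: "simple_graph n E" and c: "graph_connected n E" and n: "n \<ge> 2" and k: "k < n"
  shows "\<exists>j<n. j \<noteq> k \<and> gdist n E k j \<le> 1"
proof -
  define v where "v = (if k = 0 then 1 else 0::nat)"
  have v: "v < n" "v \<noteq> k" using n k v_def by auto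
  obtain xs where xs: "is_walk n E xs" "hd xs = k" "last xs = v"
    using c k v unfolding graph_connected_def by blast
  have ne: "xs \<noteq> []" using xs by (simp add: is_walk_def)
  have len: "Suc 0 < length xs"
  proof (rule ccontr)
    assume "\<not> Suc 0 < length xs"
    hence "length xs = 1" using ne by (cases xs) auto
    then obtain a where "xs = [a]" by (cases xs) auto
    thus False using xs v by simp
  qed
  have e: "E (xs ! 0) (xs ! Suc 0)" using xs(1) len unfolding is_walk_def by blast
  have x0: "xs ! 0 = k" using xs ne by (simp add: hd_conv_nth)
  define w where "w = xs ! Suc 0"
  have ekw: "E k w" using e x0 w_def by simp
  have w: "w < n" "w \<noteq> k" using g ekw unfolding simple_graph_def by auto
  have "is_walk n E [k, w]" using ekw w k unfolding is_walk_def
    by (auto simp: nth_Cons split: nat.splits)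
  from gdist_le[OF this] have "gdist n E k w \<le> 1" by simp
  thus ?thesis using w by blast
qed

lemma root_facts:
  fixes Di d S :: real
  assumes "0 \<le> Di" "0 \<le> d" "0 \<le> S"
  defines "r \<equiv> (Di - d + sqrt ((Di + d)^2 + 4 * d * S)) / 2"
  shows "Di \<le> r" "(r - Di) * (r + d) = d * S"
proof -
  define s where "s = sqrt ((Di + d)^2 + 4 * d * S)"
  have arg: "0 \<le> (Di + d)^2 + 4 * d * S" using assms by simp
  have s2: "s^2 = (Di + d)^2 + 4 * d * S" using arg s_def by simp
  have sge: "Di + d \<le> s" unfolding s_def using assms
    by (intro real_le_rsqrt) simp
  have rs: "r = (Di - d + s) / 2" using r_def s_def by simp
  show "Di \<le> r" using rs sge by simp
  have "(r - Di) * (r + d) = (s^2 - (Di + d)^2) / 4" unfolding rs by (simp add: power2_eq_square field_simps)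
  thus "(r - Di) * (r + d) = d * S" using s2 by simp
qed

lemma root_upper:
  fixes Di d S r x :: real
  assumes "0 \<le> d" "Di \<le> r" "(r - Di) * (r + d) = d * S" "0 \<le> x"
    and "(x - Di) * (x + d) \<le> d * S" and "0 \<le> Di"
  shows "x \<le> r"
proof (rule ccontr)
  assume "\<not> x \<le> r"
  hence xr: "r < x" by simp
  have "(r - Di) * (r + d) < (x - Di) * (x + d)"
  proof -
    have "(r - Di) * (r + d) \<le> (r - Di) * (x + d)" using xr assms by (intro mult_left_mono) auto
    also have "\<dots> < (x - Di) * (x + d)" using xr assms by (intro mult_strict_right_mono) auto
    finally show ?thesis .
  qed
  thus False using assms by simp
qed

lemma sum_split_at:
  fixes f :: "nat \<Rightarrow> real"
  assumes "i \<le> n"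
  shows "(\<Sum>j<n. f j) = (\<Sum>j<i. f j) + (\<Sum>j=i..<n. f j)"
  using sum.atLeastLessThan_concat[of 0 i n f] assms by (simp add: lessThan_atLeast0)

lemma core:
  fixes a :: "nat \<Rightarrow> nat \<Rightarrow> real" and z D :: "nat \<Rightarrow> real" and d mu :: real
  assumes n2: "2 \<le> n"
    and diag: "\<forall>p<n. a p p = 0" and sym: "\<forall>p<n. \<forall>j<n. a p j = a j p"
    and led: "\<forall>p<n. \<forall>j<n. a p j \<le> d" and ge1: "\<forall>p<n. \<forall>j<n. p \<noteq> j \<longrightarrow> 1 \<le> a p j"
    and mono: "\<forall>j k. j \<le> k \<longrightarrow> k < n \<longrightarrow> D k \<le> D j"
    and Ddef: "\<forall>k<n. D k = (\<Sum>j<n. a k j)"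
    and i: "i < n" and z0: "\<forall>p<n. 0 \<le> z p" and znz: "\<exists>p<n. z p \<noteq> 0"
    and mu0: "0 \<le> mu" and ev: "\<forall>p<n. mu * z p \<le> (\<Sum>j<n. a p j * z j)"
  defines "S \<equiv> (\<Sum>k<i. D k - D i)"
  defines "r \<equiv> (D i - d + sqrt ((D i + d)^2 + 4 * d * S)) / 2"
  shows "mu \<le> r \<and> (mu = r \<longrightarrow> (\<forall>k<n. \<exists>j<n. j \<noteq> k \<and> a k j \<le> 1) \<longrightarrow> (\<forall>k<n. D k = D 0))"
proof -
  have n01: "0 < n" "1 < n" using n2 by auto
  have "1 \<le> a 0 1" using ge1 n01 by simp
  moreover have "a 0 1 \<le> d" using led n01 by simp
  ultimately have d1: "1 \<le> d" by simp
  have a0: "\<forall>p<n. \<forall>j<n. 0 \<le> a p j"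
  proof (intro allI impI)
    fix p j assume "p < n" "j < n"
    thus "0 \<le> a p j" using diag ge1 by (cases "p = j") (auto intro: order.trans[OF zero_le_one])
  qed
  have Snn: "0 \<le> S" unfolding S_def using mono i by (intro sum_nonneg) auto
  have Di0: "0 \<le> D i" using Ddef a0 i by (auto intro!: sum_nonneg)
  note rf = root_facts[OF Di0 _ Snn, of d, folded r_def]
  have rDi: "D i \<le> r" and req: "(r - D i) * (r + d) = d * S" using rf d1 by auto
  define M where "M = Max (z ` {..<n})"
  have fin: "finite (z ` {..<n})" by simp
  have ne: "z ` {..<n} \<noteq> {}" using i by auto
  obtain u where u: "u < n" "z u = M" using Max_in[OF fin ne] unfolding M_def by auto
  have zM: "\<forall>j<n. z j \<le> M" unfolding M_def using fin by auto
  have Mpos: "0 < M" proof -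
    obtain p where p: "p < n" "z p \<noteq> 0" using znz by blast
    have "0 \<le> z p" "z p \<le> M" using z0 zM p by auto
    thus ?thesis using p(2) by linarith
  qed
  define T where "T = (\<Sum>j<n. z j)"
  have zT: "\<forall>p<n. z p \<le> T" unfolding T_def using z0 by (auto intro!: member_le_sum)
  have "z u \<le> T" using zT u(1) by blast
  hence Tpos: "0 < T" using u Mpos by simp
  have rowle: "(\<Sum>j<n. a p j * z j) \<le> d * (T - z p)" if p: "p < n" for p
  proof -
    have "(\<Sum>j<n. a p j * z j) = a p p * z p + (\<Sum>j\<in>{..<n}-{p}. a p j * z j)"
      using p by (simp add: sum.remove)
    also have "\<dots> = (\<Sum>j\<in>{..<n}-{p}. a p j * z j)" using diag p by simp
    also have "\<dots> \<le> (\<Sum>j\<in>{..<n}-{p}. d * z j)"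
      using led z0 p by (intro sum_mono mult_right_mono) auto
    also have "\<dots> = d * (T - z p)" unfolding T_def using p by (simp add: sum_distrib_left[symmetric] sum_diff1)
    finally show ?thesis .
  qed
  have two: "(mu + d) * z p \<le> d * T" if p: "p < n" for p
  proof -
    have e1: "mu * z p \<le> (\<Sum>j<n. a p j * z j)" using ev p by simp
    have e2: "(mu + d) * z p = mu * z p + d * z p" by (simp add: distrib_right)
    have e3: "d * (T - z p) = d * T - d * z p" by (simp add: right_diff_distrib)
    have "(mu + d) * z p = mu * z p + d * z p" by (rule e2)
    also have "\<dots> \<le> (\<Sum>j<n. a p j * z j) + d * z p" using e1 by simp
    also have "\<dots> \<le> d * (T - z p) + d * z p" using rowle[OF p] by simp
    also have "\<dots> = d * T" by (simp add: algebra_simps)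
    finally show ?thesis .
  qed
  have swap: "(\<Sum>p<n. \<Sum>j<n. a p j * z j) = (\<Sum>j<n. D j * z j)"
  proof -
    have "(\<Sum>p<n. \<Sum>j<n. a p j * z j) = (\<Sum>j<n. \<Sum>p<n. a p j * z j)" by (rule sum.swap)
    also have "\<dots> = (\<Sum>j<n. (\<Sum>p<n. a j p) * z j)"
      by (intro sum.cong refl) (simp add: sum_distrib_right sym)
    also have "\<dots> = (\<Sum>j<n. D j * z j)" using Ddef by simp
    finally show ?thesis .
  qed
  have three: "mu * T \<le> (\<Sum>j<n. D j * z j)"
  proof -
    have "mu * T = (\<Sum>p<n. mu * z p)" unfolding T_def by (simp add: sum_distrib_left)
    also have "\<dots> \<le> (\<Sum>p<n. \<Sum>j<n. a p j * z j)" using ev by (intro sum_mono) auto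
    finally show ?thesis using swap by simp
  qed
  define g where "g = (\<lambda>j. if j < i then (D j - D i) * M else 0)"
  have gle: "\<forall>j<n. (D j - D i) * z j \<le> g j"
  proof (intro allI impI)
    fix j assume j: "j < n"
    show "(D j - D i) * z j \<le> g j"
    proof (cases "j < i")
      case True
      hence "0 \<le> D j - D i" using mono i by auto
      thus ?thesis using True zM j unfolding g_def by (simp add: mult_left_mono)
    next
      case False
      hence "D j - D i \<le> 0" using mono j by auto
      thus ?thesis using False z0 j unfolding g_def by (simp add: mult_nonpos_nonneg)
    qed
  qed
  have gsum: "(\<Sum>j<n. g j) = S * M"
  proof -
    have "(\<Sum>j<n. g j) = (\<Sum>j<i. g j) + (\<Sum>j=i..<n. g j)" using i by (intro sum_split_at) simp
    also have "(\<Sum>j=i..<n. g j) = 0" unfolding g_def by simp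
    also have "(\<Sum>j<i. g j) = S * M" unfolding g_def S_def by (simp add: sum_distrib_right)
    finally show ?thesis by simp
  qed
  have DzT: "(\<Sum>j<n. D j * z j) = D i * T + (\<Sum>j<n. (D j - D i) * z j)"
    unfolding T_def by (simp add: sum_distrib_left sum.distrib[symmetric] algebra_simps)
  have four: "(\<Sum>j<n. D j * z j) \<le> D i * T + S * M"
  proof -
    have "(\<Sum>j<n. (D j - D i) * z j) \<le> (\<Sum>j<n. g j)" using gle by (intro sum_mono) auto
    thus ?thesis using DzT gsum by simp
  qed
  have A: "(mu - D i) * T \<le> S * M" using three four by (simp add: algebra_simps)
  have B: "(mu + d) * M \<le> d * T" using two[OF u(1)] u(2) by simp
  have part1: "mu \<le> r"
  proof (cases "mu \<le> D i")
    case True thus ?thesis using rDi by simp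
  next
    case False
    hence pos: "0 < mu - D i" by simp
    have "(mu - D i) * (mu + d) * (T * M) = ((mu - D i) * T) * ((mu + d) * M)" by (simp add: algebra_simps)
    also have "\<dots> \<le> (S * M) * (d * T)"
      by (rule mult_mono[OF A B]) (use Snn Mpos d1 mu0 in auto)
    also have "\<dots> = (d * S) * (T * M)" by (simp add: algebra_simps)
    finally have "(mu - D i) * (mu + d) \<le> d * S" using Tpos Mpos by simp
    thus ?thesis using root_upper[OF _ rDi req mu0 _ Di0] d1 by simp
  qed
  show ?thesis
  proof (intro conjI impI part1)
    assume mur: "mu = r" and nbr: "\<forall>k<n. \<exists>j<n. j \<noteq> k \<and> a k j \<le> 1"
    have muDi: "D i \<le> mu" using mur rDi by simp
    have mueq: "(mu - D i) * (mu + d) = d * S" using mur req by simp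
    have "(mu - D i) * ((mu + d) * M) = ((mu - D i) * (mu + d)) * M" by (simp only: mult.assoc)
    hence "d * (S * M) = (mu - D i) * ((mu + d) * M)" using mueq by simp
    also have "\<dots> \<le> (mu - D i) * (d * T)" using muDi B by (intro mult_left_mono) auto
    also have "\<dots> = d * ((mu - D i) * T)" by simp
    finally have "d * (S * M) \<le> d * ((mu - D i) * T)" .
    hence "S * M \<le> (mu - D i) * T" using d1 by simp
    hence E1: "(mu - D i) * T = S * M" using A by simp
    have E2: "mu * T = (\<Sum>j<n. D j * z j)" using three four E1 by (simp add: algebra_simps)
    have E3: "(\<Sum>j<n. (D j - D i) * z j) = (\<Sum>j<n. g j)" using E2 E1 DzT gsum by (simp add: algebra_simps)
    have evq: "\<forall>p<n. (\<Sum>j<n. a p j * z j) = mu * z p"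
    proof -
      have "(\<Sum>p<n. (\<Sum>j<n. a p j * z j) - mu * z p) = (\<Sum>j<n. D j * z j) - mu * T"
        unfolding T_def by (simp add: sum_subtractf swap sum_distrib_left)
      also have "\<dots> = 0" using E2 by simp
      finally have "\<forall>p\<in>{..<n}. (\<Sum>j<n. a p j * z j) - mu * z p = 0"
        using ev by (subst sum_nonneg_eq_0_iff[symmetric]) auto
      thus ?thesis by auto
    qed
    have zpos: "\<forall>p<n. 0 < z p"
    proof (intro allI impI)
      fix p assume p: "p < n"
      show "0 < z p"
      proof (rule ccontr)
        assume "\<not> 0 < z p"
        moreover have "0 \<le> z p" using z0 p by simp
        ultimately have zp: "z p = 0" by linarith
        have "(\<Sum>j<n. a p j * z j) = 0" using evq p zp by simp
        hence "\<forall>j\<in>{..<n}. a p j * z j = 0" using a0 z0 p by (subst sum_nonneg_eq_0_iff[symmetric]) auto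
        hence "a p u * z u = 0" using u by auto
        moreover have "u \<noteq> p" using u zp Mpos by auto
        ultimately have "1 \<le> a p u" using ge1 p u(1) by simp
        hence "0 < a p u * z u" using u(2) Mpos by simp
        thus False using \<open>a p u * z u = 0\<close> by simp
      qed
    qed
    have termeq: "\<forall>j<n. (D j - D i) * z j = g j"
    proof -
      have "(\<Sum>j<n. g j - (D j - D i) * z j) = 0" using E3 by (simp add: sum_subtractf)
      hence "\<forall>j\<in>{..<n}. g j - (D j - D i) * z j = 0"
        using gle by (subst sum_nonneg_eq_0_iff[symmetric]) auto
      thus ?thesis by auto
    qed
    have hi: "\<forall>j<n. i \<le> j \<longrightarrow> D j = D i"
    proof (intro allI impI)
      fix j assume j: "j < n" "i \<le> j"
      have "(D j - D i) * z j = 0" using termeq j unfolding g_def by simp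
      moreover have "0 < z j" using zpos j by simp
      ultimately show "D j = D i" by simp
    qed
    show "\<forall>k<n. D k = D 0"
    proof (rule ccontr)
      assume nall: "\<not> (\<forall>k<n. D k = D 0)"
      have "\<exists>k<i. D i < D k"
      proof (rule ccontr)
        assume "\<not> (\<exists>k<i. D i < D k)"
        note nk = this
        have lo: "\<forall>k<i. D k = D i"
        proof (intro allI impI)
          fix k assume k: "k < i"
          have "D i \<le> D k" using mono i k by simp
          moreover have "\<not> D i < D k" using nk k by blast
          ultimately show "D k = D i" by simp
        qed
        have all: "\<forall>k<n. D k = D i"
        proof (intro allI impI)
          fix k assume k: "k < n"
          show "D k = D i"
          proof (cases "k < i")
            case True thus ?thesis using lo by simp
          next
            case False
            hence "i \<le> k" by simp
            thus ?thesis using hi k by blast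
          qed
        qed
        have "\<forall>k<n. D k = D 0"
        proof (intro allI impI)
          fix k assume k: "k < n"
          have "D k = D i" using all k by blast
          moreover have "D 0 = D i" using all i by blast
          ultimately show "D k = D 0" by argo
        qed
        thus False using nall by blast
      qed
      then obtain k where k: "k < i" "D i < D k" by blast
      have kn: "k < n" using k i by simp
      have "(D k - D i) * z k = (D k - D i) * M" using termeq k kn unfolding g_def by simp
      hence zk: "z k = M" using k by simp
      have Spos: "0 < S"
      proof -
        have "D k - D i \<le> S" unfolding S_def using k mono i by (intro member_le_sum) auto
        thus ?thesis using k by simp
      qed
      have mugt: "D i < mu"
      proof (rule ccontr)
        assume "\<not> D i < mu"
        hence "mu = D i" using muDi by simp
        thus False using mueq Spos d1 by simp
      qed
      have "(mu - D i) * ((mu + d) * M) = ((mu - D i) * (mu + d)) * M" by (simp only: mult.assoc)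
      also have "\<dots> = d * (S * M)" using mueq by simp
      also have "\<dots> = d * ((mu - D i) * T)" using E1 by simp
      also have "\<dots> = (mu - D i) * (d * T)" by simp
      finally have "(mu - D i) * ((mu + d) * M) = (mu - D i) * (d * T)" .
      hence Beq: "(mu + d) * z k = d * T" using mugt zk by simp
      have rowk: "(\<Sum>j<n. a k j * z j) = d * (T - z k)" using evq kn Beq by (simp add: algebra_simps)
      have akd: "\<forall>j<n. j \<noteq> k \<longrightarrow> a k j = d"
      proof -
        have "(\<Sum>j\<in>{..<n}-{k}. a k j * z j) = (\<Sum>j<n. a k j * z j)"
          using kn diag by (simp add: sum.remove)
        also have "\<dots> = (\<Sum>j\<in>{..<n}-{k}. d * z j)"
          unfolding rowk T_def using kn by (simp add: sum_distrib_left[symmetric] sum_diff1)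
        finally have "(\<Sum>j\<in>{..<n}-{k}. d * z j - a k j * z j) = 0" by (simp add: sum_subtractf)
        moreover have nn: "\<forall>j\<in>{..<n}-{k}. 0 \<le> d * z j - a k j * z j"
        proof
          fix j assume j: "j \<in> {..<n}-{k}"
          have "a k j * z j \<le> d * z j" using led z0 kn j by (intro mult_right_mono) auto
          thus "0 \<le> d * z j - a k j * z j" by simp
        qed
        ultimately have z: "\<forall>j\<in>{..<n}-{k}. d * z j - a k j * z j = 0"
          using sum_nonneg_eq_0_iff[of "{..<n}-{k}" "\<lambda>j. d * z j - a k j * z j"] by blast
        show ?thesis
        proof (intro allI impI)
          fix j assume j: "j < n" "j \<noteq> k"
          have "(d - a k j) * z j = 0" using z j by (simp add: algebra_simps)
          moreover have "0 < z j" using zpos j by simp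
          ultimately show "a k j = d" by simp
        qed
      qed
      obtain j where j: "j < n" "j \<noteq> k" "a k j \<le> 1" using nbr kn by blast
      have "a k j = d" using akd j by simp
      hence dd: "d = 1" using j d1 by simp
      have "D k = (\<Sum>j\<in>{..<n}-{k}. a k j)" using Ddef kn diag by (simp add: sum.remove)
      also have "\<dots> = (\<Sum>j\<in>{..<n}-{k}. 1)" using akd dd by (intro sum.cong refl) simp
      also have "\<dots> = (\<Sum>j\<in>{..<n}-{i}. 1)" using kn i by simp
      also have "\<dots> \<le> (\<Sum>j\<in>{..<n}-{i}. a i j)" using ge1 i by (intro sum_mono) simp
      also have "\<dots> = D i" using Ddef i diag by (simp add: sum.remove)
      finally show False using k by simp
    qed
  qed
qed

theorem corollary6:
  fixes n :: nat and E :: "nat \<Rightarrow> nat \<Rightarrow> bool" and i :: nat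
  assumes "n \<ge> 2"
    and "simple_graph n E"
    and "graph_connected n E"
    and "\<And>j k. j \<le> k \<Longrightarrow> k < n \<Longrightarrow> transmission n E k \<le> transmission n E j"
    and "i < n"
  defines "D \<equiv> (\<lambda>k. real (transmission n E k))"
    and "d \<equiv> real (diameter n E)"
  shows "spectral_radius (distance_matrix n E)
           \<le> (D i - d + sqrt ((D i + d)^2 + 4 * d * (\<Sum>k<i. D k - D i))) / 2
         \<and> (spectral_radius (distance_matrix n E)
           = (D i - d + sqrt ((D i + d)^2 + 4 * d * (\<Sum>k<i. D k - D i))) / 2
         \<longleftrightarrow> (\<forall>k<n. D k = D 0))"
proof -
  note n2 = assms(1) and g = assms(2) and c = assms(3) and tmono = assms(4) and i = assms(5)
  define r where "r = (D i - d + sqrt ((D i + d)^2 + 4 * d * (\<Sum>k<i. D k - D i))) / 2"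
  define A where "A = distance_matrix n E"
  have Ac: "A \<in> carrier_mat n n" by (simp add: A_def distance_matrix_def)
  have Aij: "A $$ (p, j) = of_nat (gdist n E p j)" if "p < n" "j < n" for p j
    using that by (simp add: A_def distance_matrix_def)
  define a where "a = (\<lambda>p j. real (gdist n E p j))"
  have diag: "\<forall>p<n. a p p = 0" by (simp add: a_def gdist_self)
  have sym: "\<forall>p<n. \<forall>j<n. a p j = a j p" using gdist_sym[OF g c] by (simp add: a_def)
  have led: "\<forall>p<n. \<forall>j<n. a p j \<le> d" using gdist_le_diam by (simp add: a_def d_def)
  have ge1: "\<forall>p<n. \<forall>j<n. p \<noteq> j \<longrightarrow> 1 \<le> a p j"
  proof (intro allI impI)
    fix p j assume "p < n" "j < n" "p \<noteq> j"
    from gdist_pos[OF c this] show "1 \<le> a p j" by (simp add: a_def)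
  qed
  have mono: "\<forall>j k. j \<le> k \<longrightarrow> k < n \<longrightarrow> D k \<le> D j" using tmono by (simp add: D_def)
  have Ddef: "\<forall>k<n. D k = (\<Sum>j<n. a k j)" by (simp add: D_def a_def transmission_def)
  have nbr: "\<forall>k<n. \<exists>j<n. j \<noteq> k \<and> a k j \<le> 1"
  proof (intro allI impI)
    fix k assume "k < n"
    from gdist_nbr[OF g c n2 this] show "\<exists>j<n. j \<noteq> k \<and> a k j \<le> 1" by (simp add: a_def)
  qed
  have evb: "cmod lam \<le> r \<and> (cmod lam = r \<longrightarrow> (\<forall>k<n. D k = D 0))" if ev: "eigenvalue A lam" for lam
  proof -
    obtain v where v: "v \<in> carrier_vec n" "v \<noteq> 0\<^sub>v n" "A *\<^sub>v v = lam \<cdot>\<^sub>v v"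
      using ev Ac unfolding eigenvalue_def eigenvector_def by auto
    define z where "z = (\<lambda>p. cmod (v $ p))"
    have z0: "\<forall>p<n. 0 \<le> z p" by (simp add: z_def)
    have znz: "\<exists>p<n. z p \<noteq> 0"
    proof (rule ccontr)
      assume "\<not> (\<exists>p<n. z p \<noteq> 0)"
      hence "\<forall>p<n. v $ p = 0" by (simp add: z_def)
      hence "v = 0\<^sub>v n" using v(1) by (intro eq_vecI) auto
      thus False using v(2) by simp
    qed
    have evi: "\<forall>p<n. cmod lam * z p \<le> (\<Sum>j<n. a p j * z j)"
    proof (intro allI impI)
      fix p assume p: "p < n"
      have "(A *\<^sub>v v) $ p = (\<Sum>j<n. A $$ (p, j) * v $ j)"
        using Ac v(1) p by (auto simp: scalar_prod_def atLeast0LessThan intro!: sum.cong)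
      moreover have "(A *\<^sub>v v) $ p = lam * v $ p" using v p by simp
      ultimately have "lam * v $ p = (\<Sum>j<n. A $$ (p, j) * v $ j)" by simp
      note eqp = this
      have "cmod lam * z p = cmod (lam * v $ p)" by (simp add: z_def norm_mult)
      also have "\<dots> = cmod (\<Sum>j<n. A $$ (p, j) * v $ j)" using eqp by simp
      also have "\<dots> \<le> (\<Sum>j<n. cmod (A $$ (p, j) * v $ j))" by (rule norm_sum)
      also have "\<dots> = (\<Sum>j<n. a p j * z j)"
        using p by (intro sum.cong refl) (simp add: Aij norm_mult a_def z_def)
      finally show "cmod lam * z p \<le> (\<Sum>j<n. a p j * z j)" .
    qed
    have "cmod lam \<le> r \<and> (cmod lam = r \<longrightarrow> (\<forall>k<n. \<exists>j<n. j \<noteq> k \<and> a k j \<le> 1) \<longrightarrow> (\<forall>k<n. D k = D 0))"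
      unfolding r_def
      by (rule core[OF n2 diag sym led ge1 mono Ddef i z0 znz _ evi]) simp
    thus ?thesis using nbr by blast
  qed
  have n0: "0 < n" using n2 by simp
  obtain lam where lam: "lam \<in> spectrum A" "spectral_radius A = cmod lam"
    using spectral_radius_mem_max(1)[OF Ac n0] by auto
  have lamev: "eigenvalue A lam" using lam(1) by (simp add: spectrum_def)
  have part1: "spectral_radius A \<le> r" using evb[OF lamev] lam(2) by simp
  have part2: "spectral_radius A = r \<longleftrightarrow> (\<forall>k<n. D k = D 0)"
  proof
    assume "spectral_radius A = r"
    hence "cmod lam = r" using lam(2) by simp
    thus "\<forall>k<n. D k = D 0" using evb[OF lamev] by blast
  next
    assume all: "\<forall>k<n. D k = D 0"
    have Di: "D i = D 0" using all i by blast
    have S0: "(\<Sum>k<i. D k - D i) = 0"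
    proof (intro sum.neutral ballI)
      fix k assume "k \<in> {..<i}"
      hence "k < n" using i by simp
      hence "D k = D 0" using all by blast
      thus "D k - D i = 0" using Di by simp
    qed
    have D0nn: "0 \<le> D 0" by (simp add: D_def)
    have dnn: "0 \<le> d" by (simp add: d_def)
    have "r = (D i - d + sqrt ((D i + d)^2)) / 2" unfolding r_def S0 by simp
    also have "sqrt ((D i + d)^2) = D i + d" using D0nn dnn Di by simp
    finally have rD: "r = D 0" using Di by simp
    define ones where "ones = (vec n (\<lambda>_. 1) :: complex vec)"
    have one: "ones \<in> carrier_vec n" by (simp add: ones_def)
    have onz: "ones \<noteq> (0\<^sub>v n :: complex vec)"
    proof
      assume "ones = (0\<^sub>v n :: complex vec)"
      hence "ones $ 0 = (0\<^sub>v n :: complex vec) $ 0" by simp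
      hence "(1::complex) = 0" using n0 by (simp add: ones_def)
      thus False by simp
    qed
    have Aone: "A *\<^sub>v ones = complex_of_real (D 0) \<cdot>\<^sub>v ones"
    proof (rule eq_vecI)
      show "dim_vec (A *\<^sub>v ones) = dim_vec (complex_of_real (D 0) \<cdot>\<^sub>v ones)" using Ac by (simp add: ones_def)
    next
      fix p assume "p < dim_vec (complex_of_real (D 0) \<cdot>\<^sub>v ones)"
      hence p: "p < n" by (simp add: ones_def)
      have "(A *\<^sub>v ones) $ p = (\<Sum>j<n. A $$ (p, j))"
        using Ac p by (auto simp: scalar_prod_def atLeast0LessThan ones_def intro!: sum.cong)
      also have "\<dots> = (\<Sum>j<n. complex_of_real (a p j))"
        using p by (intro sum.cong refl) (simp add: Aij a_def)
      also have "\<dots> = complex_of_real (D p)" using Ddef p by simp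
      also have "\<dots> = complex_of_real (D 0)"
      proof -
        have "D p = D 0" using all p by blast
        thus ?thesis by simp
      qed
      finally show "(A *\<^sub>v ones) $ p = (complex_of_real (D 0) \<cdot>\<^sub>v ones) $ p" using p by (simp add: ones_def)
    qed
    have dr: "dim_row A = n" using Ac by simp
    have "eigenvector A (ones) (complex_of_real (D 0))"
      unfolding eigenvector_def dr using one onz Aone by blast
    hence "eigenvalue A (complex_of_real (D 0))"
      unfolding eigenvalue_def by blast
    hence "complex_of_real (D 0) \<in> spectrum A" by (simp add: spectrum_def)
    hence "cmod (complex_of_real (D 0)) \<in> cmod ` spectrum A" by (rule imageI)
    hence "cmod (complex_of_real (D 0)) \<le> spectral_radius A"
      by (rule spectral_radius_mem_max(2)[OF Ac n0])
    hence "D 0 \<le> spectral_radius A" using D0nn by simp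
    thus "spectral_radius A = r" using part1 rD by simp
  qed
  show ?thesis using part1 part2 unfolding A_def r_def by simp
qed

end
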